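(* Let $n\ge3$ and $2\le j\le n-1$. A permutation $\sigma\in\mathfrak S_n$ is minimal in the right weak order within its $\equiv^{(j)}$-class if and only if $\sigma$ admits a reduced word accepted by the automaton $\mathcal U(j)$.
   Context: Simple transpositions $s_i=(i,i+1)$, $1\le i\le n-1$. A word $s_{i_1}\cdots s_{i_k}$ represents the permutation obtained from the identity word $12\cdots n$ by successively swapping the letters in positions $i_1$, then $i_2$, \dots, then $i_k$; it is reduced if $k$ is minimal (equal to the number of inversions). Right weak order: $\sigma\le\tau$ iff value-inversions of $\sigma$ are contained in those of $\tau$. The congruence $\equiv^{(j)}$ on $\mathfrak S_n$ (permutations as words) is the equivalence relation generated by $U\,j\,V\,ac\,W\equiv U\,j\,V\,ca\,W$ for all $a<j<c$ with $a,c$ adjacent letters and $U,V,W$ words (equivalently, the permutree congruence for the decoration with $\delta_j=\text{up}$ and all other letters none). The automaton $\mathcal U(j)$ over the alphabet $\{s_1,\dots,s_{n-1}\}$ has states $h_k,i_k$ for $j-1\le k\le n-1$ and $d_k$ for $j-1\le k\le n-2$; initial state $h_{j-1}$; accepting states all $h_k$ and $i_k$; rejecting states all $d_k$. Transitions: for $j-1\le k\le n-2$, $h_k\xrightarrow{s_k}i_k$, $h_k\xrightarrow{s_{k+1}}h_{k+1}$, $i_k\xrightarrow{s_{k+1}}d_k$; and $h_{n-1}\xrightarrow{s_{n-1}}i_{n-1}$. Every letter not listed at a state leaves the state unchanged (so each $d_k$ is a rejecting sink). *)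

theory Defs
  imports Main
begin

definition perms :: "nat \<Rightarrow> nat list set" where
  "perms n = {xs. distinct xs \<and> set xs = {1..n}}"

text \<open>Swap the letters in positions i and i+1 (positions are 1-indexed).\<close>
definition swap_pos :: "nat \<Rightarrow> nat list \<Rightarrow> nat list" where
  "swap_pos i xs = xs[i - 1 := xs ! i, i := xs ! (i - 1)]"

text \<open>The permutation represented by the word s_{i_1} ... s_{i_k}
  (a word is the list [i_1,...,i_k]): starting from the identity 12...n,
  swap positions i_1, then i_2, ..., then i_k.\<close>
definition word_perm :: "nat \<Rightarrow> nat list \<Rightarrow> nat list" where
  "word_perm n w = fold swap_pos w [1..<n+1]"

definition is_word :: "nat \<Rightarrow> nat list \<Rightarrow> bool" where
  "is_word n w \<longleftrightarrow> (\<forall>i\<in>set w. 1 \<le> i \<and> i \<le> n - 1)"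

definition inversions :: "nat list \<Rightarrow> (nat \<times> nat) set" where
  "inversions xs = {(a, b). \<exists>p q. p < q \<and> q < length xs \<and> xs ! p = b \<and> xs ! q = a \<and> a < b}"

definition reduced_word :: "nat \<Rightarrow> nat list \<Rightarrow> bool" where
  "reduced_word n w \<longleftrightarrow> length w = card (inversions (word_perm n w))"

definition weak_le :: "nat list \<Rightarrow> nat list \<Rightarrow> bool" where
  "weak_le \<sigma> \<tau> \<longleftrightarrow> inversions \<sigma> \<subseteq> inversions \<tau>"

definition cong_step :: "nat \<Rightarrow> nat list \<Rightarrow> nat list \<Rightarrow> bool" where
  "cong_step j \<sigma> \<tau> \<longleftrightarrow> (\<exists>U V W a c. a < j \<and> j < c \<and>
      \<sigma> = U @ [j] @ V @ [a, c] @ W \<and> \<tau> = U @ [j] @ V @ [c, a] @ W)"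

definition congj :: "nat \<Rightarrow> nat list \<Rightarrow> nat list \<Rightarrow> bool" where
  "congj j = (\<lambda>\<sigma> \<tau>. cong_step j \<sigma> \<tau> \<or> cong_step j \<tau> \<sigma>)\<^sup>*\<^sup>*"

definition weak_minimal_in_class :: "nat \<Rightarrow> nat list \<Rightarrow> bool" where
  "weak_minimal_in_class j \<sigma> \<longleftrightarrow>
     \<not> (\<exists>\<tau>. congj j \<sigma> \<tau> \<and> weak_le \<tau> \<sigma> \<and> \<tau> \<noteq> \<sigma>)"

datatype ustate = H nat | I nat | D nat

fun u_delta :: "nat \<Rightarrow> ustate \<Rightarrow> nat \<Rightarrow> ustate" where
  "u_delta n (H k) i =
     (if k + 2 \<le> n \<and> i = k then I k
      else if k + 2 \<le> n \<and> i = k + 1 then H (k + 1)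
      else if k = n - 1 \<and> i = n - 1 then I k
      else H k)"
| "u_delta n (I k) i = (if k + 2 \<le> n \<and> i = k + 1 then D k else I k)"
| "u_delta n (D k) i = D k"

fun u_accepting :: "ustate \<Rightarrow> bool" where
  "u_accepting (H k) = True"
| "u_accepting (I k) = True"
| "u_accepting (D k) = False"

definition U_accepts :: "nat \<Rightarrow> nat \<Rightarrow> nat list \<Rightarrow> bool" where
  "U_accepts n j w \<longleftrightarrow> u_accepting (fold (\<lambda>i q. u_delta n q i) w (H (j - 1)))"

end

theory Submission
  imports Defs
begin


definition bef :: "nat list \<Rightarrow> nat \<Rightarrow> nat \<Rightarrow> bool" where
  "bef xs u v \<longleftrightarrow> (\<exists>p q. p < q \<and> q < length xs \<and> xs ! p = u \<and> xs ! q = v)"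

lemma inv_bef: "inversions xs = {(a, b). a < b \<and> bef xs b a}"
  unfolding inversions_def bef_def by auto

lemma bef_Nil[simp]: "\<not> bef [] u v"
  unfolding bef_def by auto

lemma bef_Cons: "bef (x # xs) u v \<longleftrightarrow> (u = x \<and> v \<in> set xs) \<or> bef xs u v"
proof
  assume "bef (x # xs) u v"
  then obtain p q where pq: "p < q" "q < length (x#xs)" "(x#xs) ! p = u" "(x#xs) ! q = v"
    unfolding bef_def by blast
  show "(u = x \<and> v \<in> set xs) \<or> bef xs u v"
  proof (cases p)
    case 0
    then obtain q' where "q = Suc q'" using pq by (cases q) auto
    then show ?thesis using pq 0 by auto
  next
    case (Suc p')
    then obtain q' where "q = Suc q'" using pq by (cases q) auto
    then show ?thesis using pq Suc unfolding bef_def by auto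
  qed
next
  assume "(u = x \<and> v \<in> set xs) \<or> bef xs u v"
  then show "bef (x # xs) u v"
  proof
    assume "u = x \<and> v \<in> set xs"
    then obtain q where "q < length xs" "xs ! q = v" by (auto simp: in_set_conv_nth)
    then show ?thesis unfolding bef_def using \<open>u = x \<and> v \<in> set xs\<close>
      by (intro exI[of _ 0] exI[of _ "Suc q"]) auto
  next
    assume "bef xs u v"
    then obtain p q where "p < q" "q < length xs" "xs ! p = u" "xs ! q = v"
      unfolding bef_def by blast
    then show ?thesis unfolding bef_def
      by (intro exI[of _ "Suc p"] exI[of _ "Suc q"]) auto
  qed
qed

lemma bef_append: "bef (A @ B) u v \<longleftrightarrow> bef A u v \<or> bef B u v \<or> (u \<in> set A \<and> v \<in> set B)"
  by (induction A) (auto simp: bef_Cons)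

lemma bef_set: "bef xs u v \<Longrightarrow> u \<in> set xs \<and> v \<in> set xs"
  unfolding bef_def by auto

lemma bef_single[simp]: "\<not> bef [x] u v"
  by (simp add: bef_Cons)

lemma bef_sorted: "sorted_wrt (<) xs \<Longrightarrow> bef xs u v \<Longrightarrow> u < v"
  unfolding bef_def using sorted_wrt_nth_less by blast

lemma inv_sorted: "sorted_wrt (<) xs \<Longrightarrow> inversions xs = {}"
  unfolding inv_bef using bef_sorted[of xs] by fastforce

lemma inv_id: "inversions [1..<n+1] = {}"
  by (rule inv_sorted) (simp only: sorted_wrt_upt)

lemma inv_finite: "finite (inversions xs)"
proof -
  have "inversions xs \<subseteq> set xs \<times> set xs" unfolding inv_bef using bef_set by auto
  then show ?thesis using finite_subset by blast
qed

lemma swap_app: "length A = i - 1 \<Longrightarrow> 1 \<le> i \<Longrightarrow> swap_pos i (A @ [a, b] @ B) = A @ [b, a] @ B"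
  unfolding swap_pos_def
  by (auto simp: list_update_append nth_append)

lemma bef_mid: "bef (A@[x,y]@B) u v \<longleftrightarrow> bef A u v \<or> bef B u v \<or> (u \<in> set A \<and> (v = x \<or> v = y \<or> v \<in> set B))
   \<or> ((u = x \<or> u = y) \<and> v \<in> set B) \<or> (u = x \<and> v = y)"
  by (auto simp: bef_append bef_Cons)

lemma swap_decomp:
  assumes "1 \<le> i" "i < length xs"
  shows "xs = take (i-1) xs @ [xs!(i-1), xs!i] @ drop (i+1) xs"
    and "swap_pos i xs = take (i-1) xs @ [xs!i, xs!(i-1)] @ drop (i+1) xs"
proof -
  obtain m where m: "i = Suc m" using assms(1) by (cases i) auto
  have "xs = take m xs @ drop m xs" by simp
  also have "drop m xs = xs!m # drop (Suc m) xs" using assms m by (simp add: Cons_nth_drop_Suc)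
  also have "drop (Suc m) xs = xs!(Suc m) # drop (Suc (Suc m)) xs" using assms m by (simp add: Cons_nth_drop_Suc)
  finally show 1: "xs = take (i-1) xs @ [xs!(i-1), xs!i] @ drop (i+1) xs" using m by simp
  have l: "length (take (i-1) xs) = i - 1" using assms by simp
  show "swap_pos i xs = take (i-1) xs @ [xs!i, xs!(i-1)] @ drop (i+1) xs"
    using swap_app[OF l assms(1), of "xs!(i-1)" "xs!i" "drop (i+1) xs"] 1 by simp
qed

lemma inv_asc:
  assumes "distinct (A @ [a, b] @ B)" "a < b"
  shows "inversions (A @ [b, a] @ B) = insert (a, b) (inversions (A @ [a, b] @ B))"
    and "(a, b) \<notin> inversions (A @ [a, b] @ B)"
proof -
  have d: "a \<notin> set A" "b \<notin> set A" "a \<notin> set B" "b \<notin> set B" "a \<noteq> b" "set A \<inter> set B = {}"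
    using assms(1) by auto
  have bA: "bef A u v \<Longrightarrow> u \<in> set A \<and> v \<in> set A" for u v using bef_set by blast
  have bB: "bef B u v \<Longrightarrow> u \<in> set B \<and> v \<in> set B" for u v using bef_set by blast
  have key: "u < v \<Longrightarrow> bef (A @ [b, a] @ B) v u \<longleftrightarrow> bef (A @ [a, b] @ B) v u \<or> (v = b \<and> u = a)" for u v
  proof -
    assume uv: "u < v"
    have nab: "\<not> (v = a \<and> u = b)" using uv assms(2) by auto
    show ?thesis unfolding bef_mid using nab d bA bB by blast
  qed
  have key2: "\<not> bef (A @ [a, b] @ B) b a"
    unfolding bef_mid using d bA bB by blast
  show "inversions (A @ [b, a] @ B) = insert (a, b) (inversions (A @ [a, b] @ B))"
  proof (rule set_eqI)
    fix p :: "nat \<times> nat"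
    obtain u v where p: "p = (u, v)" by (cases p)
    show "p \<in> inversions (A @ [b, a] @ B) \<longleftrightarrow> p \<in> insert (a, b) (inversions (A @ [a, b] @ B))"
      unfolding p inv_bef using key[of u v] assms(2) by auto
  qed
  show "(a, b) \<notin> inversions (A @ [a, b] @ B)"
    unfolding inv_bef using key2 by auto
qed



fun asc_chain :: "nat list \<Rightarrow> nat list \<Rightarrow> bool" where
  "asc_chain xs [] = True"
| "asc_chain xs (i # w) = (1 \<le> i \<and> i < length xs \<and> xs ! (i-1) < xs ! i \<and> asc_chain (swap_pos i xs) w)"

lemma swap_length[simp]: "length (swap_pos i xs) = length xs"
  unfolding swap_pos_def by simp

lemma swap_distinct:
  assumes "1 \<le> i" "i < length xs" shows "distinct (swap_pos i xs) \<longleftrightarrow> distinct xs"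
proof -
  note e1 = swap_decomp(1)[OF assms] and e2 = swap_decomp(2)[OF assms]
  have "distinct (swap_pos i xs) \<longleftrightarrow> distinct (take (i-1) xs @ [xs!i, xs!(i-1)] @ drop (i+1) xs)"
    by (simp only: e2)
  also have "\<dots> \<longleftrightarrow> distinct (take (i-1) xs @ [xs!(i-1), xs!i] @ drop (i+1) xs)" by auto
  also have "\<dots> \<longleftrightarrow> distinct xs" by (rule arg_cong[OF e1[symmetric]])
  finally show ?thesis .
qed

lemma swap_set:
  assumes "1 \<le> i" "i < length xs" shows "set (swap_pos i xs) = set xs"
proof -
  note e1 = swap_decomp(1)[OF assms] and e2 = swap_decomp(2)[OF assms]
  have "set (swap_pos i xs) = set (take (i-1) xs @ [xs!i, xs!(i-1)] @ drop (i+1) xs)"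
    by (simp only: e2)
  also have "\<dots> = set (take (i-1) xs @ [xs!(i-1), xs!i] @ drop (i+1) xs)" by auto
  also have "\<dots> = set xs" by (rule arg_cong[OF e1[symmetric]])
  finally show ?thesis .
qed

lemma swap_nth:
  assumes "1 \<le> i" "i < length xs"
  shows "swap_pos i xs ! p = (if p = i - 1 then xs ! i else if p = i then xs ! (i-1) else xs ! p)"
  using assms unfolding swap_pos_def by (auto simp: nth_list_update)

lemma swap_inv_asc:
  assumes "1 \<le> i" "i < length xs" "distinct xs" "xs ! (i-1) < xs ! i"
  shows "inversions (swap_pos i xs) = insert (xs!(i-1), xs!i) (inversions xs)"
    and "(xs!(i-1), xs!i) \<notin> inversions xs"
proof -
  have e: "xs = take (i-1) xs @ [xs!(i-1), xs!i] @ drop (i+1) xs" using swap_decomp(1)[OF assms(1,2)] .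
  have d: "distinct (take (i-1) xs @ [xs!(i-1), xs!i] @ drop (i+1) xs)" using assms(3) e by simp
  show "inversions (swap_pos i xs) = insert (xs!(i-1), xs!i) (inversions xs)"
    using inv_asc(1)[OF d assms(4)] swap_decomp(2)[OF assms(1,2)] e by simp
  show "(xs!(i-1), xs!i) \<notin> inversions xs"
    using inv_asc(2)[OF d assms(4)] e by simp
qed

lemma swap_swap:
  assumes "1 \<le> i" "i < length xs" shows "swap_pos i (swap_pos i xs) = xs"
  by (rule nth_equalityI) (use assms in \<open>auto simp: swap_nth\<close>)

lemma swap_inv_desc:
  assumes "1 \<le> i" "i < length xs" "distinct xs" "xs ! (i-1) > xs ! i"
  shows "card (inversions (swap_pos i xs)) + 1 = card (inversions xs)"
proof -
  let ?ys = "swap_pos i xs"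
  have "?ys ! (i-1) < ?ys ! i" using assms by (simp add: swap_nth)
  moreover have "distinct ?ys" using swap_distinct assms by simp
  ultimately have "inversions (swap_pos i ?ys) = insert (?ys!(i-1), ?ys!i) (inversions ?ys)"
     "(?ys!(i-1), ?ys!i) \<notin> inversions ?ys"
    using swap_inv_asc[of i ?ys] assms by auto
  then show ?thesis using swap_swap[OF assms(1,2)] inv_finite by simp
qed

lemma asc_chain_append:
  "asc_chain xs (u @ v) \<longleftrightarrow> asc_chain xs u \<and> asc_chain (fold swap_pos u xs) v"
  by (induction u arbitrary: xs) auto

lemma asc_chain_props:
  assumes "asc_chain xs w" "distinct xs"
  shows "card (inversions (fold swap_pos w xs)) = card (inversions xs) + length w"
    "inversions xs \<subseteq> inversions (fold swap_pos w xs)"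
    "distinct (fold swap_pos w xs)" "length (fold swap_pos w xs) = length xs"
    "set (fold swap_pos w xs) = set xs"
    "\<forall>i\<in>set w. 1 \<le> i \<and> i < length xs"
  using assms
proof (induction w arbitrary: xs)
  case Nil
  { case 1 then show ?case by simp next
    case 2 then show ?case by simp next
    case 3 then show ?case by simp next
    case 4 then show ?case by simp next
    case 5 then show ?case by simp next
    case 6 then show ?case by simp }
next
  case (Cons i w)
  { case 1
    then have h: "1 \<le> i" "i < length xs" "xs!(i-1) < xs!i" "asc_chain (swap_pos i xs) w" by auto
    have "distinct (swap_pos i xs)" using swap_distinct h 1 by simp
    then show ?case using Cons.IH(1)[OF h(4)] swap_inv_asc[OF h(1,2) 1(2) h(3)] inv_finite by simp
  next
    case 2
    then have h: "1 \<le> i" "i < length xs" "xs!(i-1) < xs!i" "asc_chain (swap_pos i xs) w" by auto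
    have "distinct (swap_pos i xs)" using swap_distinct h 2 by simp
    then show ?case using Cons.IH(2)[OF h(4)] swap_inv_asc[OF h(1,2) 2(2) h(3)] by auto
  next
    case 3
    then have h: "1 \<le> i" "i < length xs" "xs!(i-1) < xs!i" "asc_chain (swap_pos i xs) w" by auto
    have "distinct (swap_pos i xs)" using swap_distinct h 3 by simp
    then show ?case using Cons.IH(3)[OF h(4)] by simp
  next
    case 4
    then have h: "1 \<le> i" "i < length xs" "xs!(i-1) < xs!i" "asc_chain (swap_pos i xs) w" by auto
    have "distinct (swap_pos i xs)" using swap_distinct h 4 by simp
    then show ?case using Cons.IH(4)[OF h(4)] by simp
  next
    case 5
    then have h: "1 \<le> i" "i < length xs" "xs!(i-1) < xs!i" "asc_chain (swap_pos i xs) w" by auto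
    have "distinct (swap_pos i xs)" using swap_distinct h 5 by simp
    then show ?case using Cons.IH(5)[OF h(4)] swap_set[OF h(1,2)] by simp
  next
    case 6
    then have h: "1 \<le> i" "i < length xs" "xs!(i-1) < xs!i" "asc_chain (swap_pos i xs) w" by auto
    have "distinct (swap_pos i xs)" using swap_distinct h 6 by simp
    then show ?case using Cons.IH(6)[OF h(4)] h by simp }
qed

lemma card_bound:
  assumes "distinct xs" "\<forall>i\<in>set w. 1 \<le> i \<and> i < length xs"
  shows "card (inversions (fold swap_pos w xs)) \<le> card (inversions xs) + length w"
    and "card (inversions (fold swap_pos w xs)) = card (inversions xs) + length w \<Longrightarrow> asc_chain xs w"
  using assms
proof (induction w arbitrary: xs)
  case Nil
  { case 1 then show ?case by simp next case 2 then show ?case by simp }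
next
  case (Cons i w)
  { case 1
    then have h: "1 \<le> i" "i < length xs" and w: "\<forall>i\<in>set w. 1 \<le> i \<and> i < length (swap_pos i xs)" by auto
    have d: "distinct (swap_pos i xs)" using swap_distinct h 1 by simp
    have ne: "xs!(i-1) \<noteq> xs!i" using 1(1) h by (simp add: nth_eq_iff_index_eq)
    have "card (inversions (swap_pos i xs)) \<le> card (inversions xs) + 1"
    proof (cases "xs!(i-1) < xs!i")
      case True then show ?thesis using swap_inv_asc[OF h 1(1) True] inv_finite by simp
    next
      case False then show ?thesis using swap_inv_desc[OF h 1(1)] ne by simp
    qed
    then show ?case using Cons.IH(1)[OF d] w by fastforce
  next
    case 2
    then have h: "1 \<le> i" "i < length xs" and w: "\<forall>i\<in>set w. 1 \<le> i \<and> i < length (swap_pos i xs)" by auto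
    have d: "distinct (swap_pos i xs)" using swap_distinct h 2 by simp
    have ne: "xs!(i-1) \<noteq> xs!i" using 2(2) h by (simp add: nth_eq_iff_index_eq)
    have b: "card (inversions (fold swap_pos w (swap_pos i xs))) \<le> card (inversions (swap_pos i xs)) + length w"
      using Cons.IH(1)[OF d] w by fastforce
    show ?case
    proof (cases "xs!(i-1) < xs!i")
      case True
      have "card (inversions (swap_pos i xs)) = card (inversions xs) + 1"
        using swap_inv_asc[OF h 2(2) True] inv_finite by simp
      then have "asc_chain (swap_pos i xs) w" using Cons.IH(2)[OF _ d] w 2(1) by fastforce
      then show ?thesis using h True by simp
    next
      case False
      then have "card (inversions (swap_pos i xs)) + 1 = card (inversions xs)"
        using swap_inv_desc[OF h 2(2)] ne by simp
      then show ?thesis using b 2(1) by simp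
    qed }
qed

lemma id_props: "distinct [1..<n+1]" "set [1..<n+1] = {1..n}" "length [1..<n+1] = n"
  by auto

lemma reduced_iff:
  assumes "n \<ge> 1"
  shows "(is_word n w \<and> reduced_word n w) \<longleftrightarrow> asc_chain [1..<n+1] w"
proof
  assume a: "is_word n w \<and> reduced_word n w"
  have "\<forall>i\<in>set w. 1 \<le> i \<and> i < length [1..<n+1]" using a assms unfolding is_word_def by auto
  then show "asc_chain [1..<n+1] w"
    using card_bound(2)[of "[1..<n+1]" w] a inv_id unfolding reduced_word_def word_perm_def by simp
next
  assume a: "asc_chain [1..<n+1] w"
  show "is_word n w \<and> reduced_word n w"
  proof -
    have c: "card (inversions (fold swap_pos w [1..<n+1])) = length w"
      using asc_chain_props(1)[OF a id_props(1)] inv_id by simp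
    have l: "\<forall>i\<in>set w. 1 \<le> i \<and> i < n" using asc_chain_props(6)[OF a id_props(1)] id_props(3)[of n] by metis
    show ?thesis unfolding reduced_word_def word_perm_def is_word_def using c l by force
  qed
qed



lemma bef_nth: "p < q \<Longrightarrow> q < length xs \<Longrightarrow> bef xs (xs!p) (xs!q)"
  unfolding bef_def by blast

lemma exists_ascent:
  assumes "distinct xs" "distinct ys" "set xs = set ys" "xs \<noteq> ys" "inversions xs \<subseteq> inversions ys"
  shows "\<exists>i. 1 \<le> i \<and> i < length xs \<and> xs!(i-1) < xs!i \<and> (xs!(i-1), xs!i) \<in> inversions ys"
  using assms
proof (induction xs arbitrary: ys)
  case Nil
  then show ?case by simp
next
  case (Cons x xs')
  obtain y ys' where ys: "ys = y # ys'" using Cons.prems(3) by (cases ys) auto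
  show ?case
  proof (cases "y = x")
    case True
    have d1: "distinct xs'" "distinct ys'" using Cons.prems ys by auto
    have s: "set xs' = set ys'" using Cons.prems ys True by auto
    have ne: "xs' \<noteq> ys'" using Cons.prems ys True by auto
    have sub: "inversions xs' \<subseteq> inversions ys'"
    proof
      fix p assume p: "p \<in> inversions xs'"
      obtain a b where ab: "p = (a,b)" by (cases p)
      have "a < b" "bef xs' b a" using p ab unfolding inv_bef by auto
      then have "(a,b) \<in> inversions (x#xs')" unfolding inv_bef by (auto simp: bef_Cons)
      then have "bef (y#ys') b a" using Cons.prems(5) ys unfolding inv_bef by auto
      moreover have "b \<noteq> x" using \<open>bef xs' b a\<close> bef_set Cons.prems(1) by auto
      ultimately have "bef ys' b a" using True by (auto simp: bef_Cons)
      then show "p \<in> inversions ys'" using ab \<open>a < b\<close> unfolding inv_bef by auto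
    qed
    obtain i where i: "1 \<le> i" "i < length xs'" "xs'!(i-1) < xs'!i" "(xs'!(i-1), xs'!i) \<in> inversions ys'"
      using Cons.IH[OF d1(1) d1(2) s ne sub] by blast
    have "(xs'!(i-1), xs'!i) \<in> inversions ys" using i(4) ys unfolding inv_bef by (auto simp: bef_Cons)
    moreover have "(x#xs')!(Suc i - 1) = xs'!(i-1)" "(x#xs')!(Suc i) = xs'!i" using i(1)
      by (auto simp: nth_Cons')
    ultimately show ?thesis using i by (intro exI[of _ "Suc i"]) auto
  next
    case False
    have "y \<in> set (x#xs')" using Cons.prems(3) ys by auto
    then obtain q where q: "q < length (x#xs')" "(x#xs')!q = y" by (metis in_set_conv_nth)
    have q1: "q \<ge> 1" using q False by (cases q) auto
    define z where "z = (x#xs')!(q-1)"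
    have zy: "z \<noteq> y" using nth_eq_iff_index_eq[OF Cons.prems(1), of "q-1" q] q q1 unfolding z_def by force
    have zin: "z \<in> set ys'" using Cons.prems(3) ys zy q unfolding z_def
      by (metis diff_le_self le_less_trans nth_mem set_ConsD)
    show ?thesis
    proof (cases "z < y")
      case True
      have "bef ys y z" using ys zin by (simp add: bef_Cons)
      then have "(z, y) \<in> inversions ys" using True unfolding inv_bef by auto
      then show ?thesis using q q1 True unfolding z_def by (intro exI[of _ q]) auto
    next
      case False
      then have "y < z" using zy by simp
      have "bef (x#xs') z y" unfolding z_def using bef_nth[of "q-1" q "x#xs'"] q q1 by simp
      then have "(y, z) \<in> inversions ys" using Cons.prems(5) \<open>y < z\<close> unfolding inv_bef by auto
      then have "bef (y#ys') z y" using ys unfolding inv_bef by auto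
      then have "y \<in> set ys'" using zy by (auto simp: bef_Cons dest: bef_set)
      then show ?thesis using Cons.prems(2) ys by simp
    qed
  qed
qed

lemma swap_obtain:
  assumes "1 \<le> i" "i < length xs"
  obtains A a b B where "xs = A @ [a, b] @ B" "swap_pos i xs = A @ [b, a] @ B" "length A = i - 1"
  using swap_decomp[OF assms] assms by (intro that[of "take (i-1) xs" "xs!(i-1)" "xs!i" "drop (i+1) xs"]) auto

lemma take_swap_set:
  assumes "1 \<le> i" "i < length xs" "c \<noteq> i"
  shows "set (take c (swap_pos i xs)) = set (take c xs)"
proof -
  obtain A a b B where e: "xs = A @ [a, b] @ B" and e2: "swap_pos i xs = A @ [b, a] @ B"
    and lA: "length A = i - 1" using swap_obtain[OF assms(1,2)] by blast
  have "set (take c (A @ [b, a] @ B)) = set (take c (A @ [a, b] @ B))"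
  proof (cases "c \<le> i - 1")
    case True
    then show ?thesis using lA by simp
  next
    case False
    then have "c \<ge> i + 1" using assms by simp
    then have "c - length A \<ge> 2" using lA assms by simp
    then obtain m where m: "c - length A = Suc (Suc m)" by (metis add_2_eq_Suc le_Suc_ex)
    have "take c (A @ [b, a] @ B) = A @ [b, a] @ take m B"
      using m False lA by (simp add: take_append)
    moreover have "take c (A @ [a, b] @ B) = A @ [a, b] @ take m B"
      using m False lA by (simp add: take_append)
    ultimately show ?thesis by auto
  qed
  then show ?thesis by (simp only: e2 flip: e)
qed

lemma cut_not_ascent:
  assumes "distinct xs" "distinct ys" "1 \<le> c" "c < length xs"
    "set (take c xs) = set (take c ys)" "(xs!(c-1), xs!c) \<in> inversions ys"
  shows False
proof -
  have "bef ys (xs!c) (xs!(c-1))" using assms(6) unfolding inv_bef by auto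
  have a0: "xs!(c-1) \<in> set (take c xs)"
  proof -
    have "take c xs ! (c-1) = xs!(c-1)" using assms(3) by simp
    moreover have "c - 1 < length (take c xs)" using assms(3,4) by simp
    ultimately show ?thesis by (metis nth_mem)
  qed
  then have a: "xs!(c-1) \<in> set (take c ys)" using assms(5) by simp
  have "xs!c \<in> set (drop c xs)" using Cons_nth_drop_Suc[OF assms(4)] by (metis list.set_intros(1))
  then have "xs!c \<notin> set (take c xs)" using set_take_disj_set_drop_if_distinct[OF assms(1), of c c] by blast
  then have b: "xs!c \<notin> set (take c ys)" using assms(5) by simp
  have "bef (take c ys) (xs!c) (xs!(c-1)) \<or> bef (drop c ys) (xs!c) (xs!(c-1)) \<or>
     (xs!c \<in> set (take c ys) \<and> xs!(c-1) \<in> set (drop c ys))"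
    using bef_append[of "take c ys" "drop c ys" "xs!c" "xs!(c-1)"] \<open>bef ys _ _\<close> by simp
  then have "bef (drop c ys) (xs!c) (xs!(c-1))" using b bef_set by blast
  then have "xs!(c-1) \<in> set (drop c ys)" using bef_set by blast
  then show False using a set_take_disj_set_drop_if_distinct[OF assms(2), of c c] by blast
qed

lemma chain:
  assumes "distinct xs" "distinct ys" "set xs = set ys" "inversions xs \<subseteq> inversions ys"
  shows "\<exists>w. asc_chain xs w \<and> fold swap_pos w xs = ys \<and>
             (\<forall>c. set (take c xs) = set (take c ys) \<longrightarrow> c \<notin> set w)"
  using assms
proof (induction "card (inversions ys) - card (inversions xs)" arbitrary: xs rule: less_induct)
  case less
  show ?case
  proof (cases "xs = ys")
    case True
    then show ?thesis by (intro exI[of _ "[]"]) auto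
  next
    case False
    obtain i where i: "1 \<le> i" "i < length xs" "xs!(i-1) < xs!i" "(xs!(i-1), xs!i) \<in> inversions ys"
      using exists_ascent[OF less.prems(1,2,3) False less.prems(4)] by blast
    let ?xs' = "swap_pos i xs"
    have inv': "inversions ?xs' = insert (xs!(i-1), xs!i) (inversions xs)"
      and nin: "(xs!(i-1), xs!i) \<notin> inversions xs"
      using swap_inv_asc[OF i(1,2) less.prems(1) i(3)] by auto
    have d': "distinct ?xs'" using swap_distinct i less.prems by simp
    have s': "set ?xs' = set ys" using swap_set i less.prems by simp
    have sub': "inversions ?xs' \<subseteq> inversions ys" using inv' i(4) less.prems(4) by auto
    have "card (inversions ?xs') = card (inversions xs) + 1" using inv' nin inv_finite by simp
    moreover have "card (inversions ?xs') \<le> card (inversions ys)"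
      using sub' inv_finite card_mono by blast
    ultimately have lt: "card (inversions ys) - card (inversions ?xs') < card (inversions ys) - card (inversions xs)"
      by simp
    obtain w where w: "asc_chain ?xs' w" "fold swap_pos w ?xs' = ys"
      "\<forall>c. set (take c ?xs') = set (take c ys) \<longrightarrow> c \<notin> set w"
      using less.hyps[OF lt d' less.prems(2) s' sub'] by blast
    have "\<forall>c. set (take c xs) = set (take c ys) \<longrightarrow> c \<notin> set (i # w)"
    proof (intro allI impI)
      fix c assume c: "set (take c xs) = set (take c ys)"
      have "c \<noteq> i" using cut_not_ascent[OF less.prems(1,2) _ _ _ i(4)] c i by auto
      moreover have "set (take c ?xs') = set (take c ys)" using take_swap_set[OF i(1,2) \<open>c \<noteq> i\<close>] c by simp
      ultimately show "c \<notin> set (i # w)" using w(3) by auto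
    qed
    then show ?thesis using w i by (intro exI[of _ "i # w"]) auto
  qed
qed



definition Pgood :: "nat \<Rightarrow> nat list \<Rightarrow> bool" where
  "Pgood j \<sigma> \<longleftrightarrow> (\<forall>U V W c a. \<sigma> = U @ [j] @ V @ [c, a] @ W \<longrightarrow> \<not> (a < j \<and> j < c))"

definition Inv :: "nat \<Rightarrow> nat \<Rightarrow> nat list \<Rightarrow> ustate \<Rightarrow> bool" where
  "Inv n j \<pi> q \<longleftrightarrow> distinct \<pi> \<and> length \<pi> = n \<and> (case q of
      H k \<Rightarrow> k < n \<and> \<pi>!k = j \<and> (\<forall>p. k < p \<and> p < n \<longrightarrow> j < \<pi>!p)
    | I k \<Rightarrow> k < n \<and> (\<exists>pj<k. \<pi>!pj = j \<and> (\<forall>p. pj < p \<and> p \<le> k \<longrightarrow> \<pi>!p < j))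
              \<and> (\<forall>p. k < p \<and> p < n \<longrightarrow> j < \<pi>!p)
    | D k \<Rightarrow> True)"

lemma Inv_step_H:
  assumes inv: "Inv n j \<pi> (H k)" and i: "1 \<le> i" "i < n" "\<pi>!(i-1) < \<pi>!i"
  shows "Inv n j (swap_pos i \<pi>) (u_delta n (H k) i)"
proof -
  have d: "distinct \<pi>" "length \<pi> = n" and hk: "k < n" "\<pi>!k = j" "\<forall>p. k < p \<and> p < n \<longrightarrow> j < \<pi>!p"
    using inv unfolding Inv_def by auto
  have i': "1 \<le> i" "i < length \<pi>" using i d by auto
  have d': "distinct (swap_pos i \<pi>)" "length (swap_pos i \<pi>) = n" using swap_distinct[OF i'] d by auto
  note sn = swap_nth[OF i']
  consider "i = k" | "i = k + 1" | "i \<noteq> k" "i \<noteq> k + 1" by blast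
  then show ?thesis
  proof cases
    case 1
    have u: "u_delta n (H k) i = I k" using 1 hk(1) by auto
    have "\<exists>pj<k. swap_pos i \<pi> ! pj = j \<and> (\<forall>p. pj < p \<and> p \<le> k \<longrightarrow> swap_pos i \<pi> ! p < j)"
      using 1 i hk by (intro exI[of _ "k-1"]) (use sn in auto)
    moreover have "\<forall>p. k < p \<and> p < n \<longrightarrow> j < swap_pos i \<pi> ! p" using 1 i hk sn by auto
    ultimately show ?thesis unfolding u Inv_def using d' hk by auto
  next
    case 2
    have u: "u_delta n (H k) i = H (k+1)" using 2 i by auto
    have "swap_pos i \<pi> ! (k+1) = j" using 2 hk sn by auto
    moreover have "\<forall>p. k + 1 < p \<and> p < n \<longrightarrow> j < swap_pos i \<pi> ! p" using 2 hk sn by auto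
    ultimately show ?thesis unfolding u Inv_def using d' 2 i by auto
  next
    case 3
    have u: "u_delta n (H k) i = H k" using 3 by auto
    have "swap_pos i \<pi> ! k = j" using 3 hk i sn by auto
    moreover have "\<forall>p. k < p \<and> p < n \<longrightarrow> j < swap_pos i \<pi> ! p"
    proof (intro allI impI)
      fix p assume p: "k < p \<and> p < n"
      show "j < swap_pos i \<pi> ! p"
      proof (cases "p = i - 1")
        case True then show ?thesis using p hk i 3 sn by auto
      next
        case False
        show ?thesis
        proof (cases "p = i")
          case True
          then have "k < i - 1" using p 3 by auto
          then show ?thesis using True False hk i sn by auto
        next
          case False2: False
          then show ?thesis using False p hk sn by auto
        qed
      qed
    qed
    ultimately show ?thesis unfolding u Inv_def using d' hk by auto
  qed
qed

lemma Inv_step_I: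
  assumes inv: "Inv n j \<pi> (I k)" and i: "1 \<le> i" "i < n" "\<pi>!(i-1) < \<pi>!i"
  shows "Inv n j (swap_pos i \<pi>) (u_delta n (I k) i)"
proof -
  have d: "distinct \<pi>" "length \<pi> = n" and hk: "k < n" "\<forall>p. k < p \<and> p < n \<longrightarrow> j < \<pi>!p"
    using inv unfolding Inv_def by auto
  obtain pj where pj: "pj < k" "\<pi>!pj = j" "\<forall>p. pj < p \<and> p \<le> k \<longrightarrow> \<pi>!p < j"
    using inv unfolding Inv_def by auto
  have i': "1 \<le> i" "i < length \<pi>" using i d by auto
  have d': "distinct (swap_pos i \<pi>)" "length (swap_pos i \<pi>) = n" using swap_distinct[OF i'] d by auto
  note sn = swap_nth[OF i']
  show ?thesis
  proof (cases "k + 2 \<le> n \<and> i = k + 1")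
    case True
    then show ?thesis unfolding Inv_def using d' by auto
  next
    case False
    have ik: "i \<noteq> k + 1" using False i by auto
    have u: "u_delta n (I k) i = I k" using False by auto
    have large: "\<forall>p. k < p \<and> p < n \<longrightarrow> j < swap_pos i \<pi> ! p"
    proof (intro allI impI)
      fix p assume p: "k < p \<and> p < n"
      show "j < swap_pos i \<pi> ! p"
      proof (cases "p = i - 1")
        case True then show ?thesis using p hk i sn by auto
      next
        case False
        show ?thesis
        proof (cases "p = i")
          case True
          then have "k < i - 1" using p ik by auto
          then show ?thesis using True False hk i sn by auto
        next
          case False2: False
          then show ?thesis using False p hk sn by auto
        qed
      qed
    qed
    have ex: "\<exists>pj<k. swap_pos i \<pi> ! pj = j \<and> (\<forall>p. pj < p \<and> p \<le> k \<longrightarrow> swap_pos i \<pi> ! p < j)"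
    proof (cases "i = pj")
      case True
      have "\<forall>p. pj - 1 < p \<and> p \<le> k \<longrightarrow> swap_pos i \<pi> ! p < j"
      proof (intro allI impI)
        fix p assume p: "pj - 1 < p \<and> p \<le> k"
        show "swap_pos i \<pi> ! p < j"
        proof (cases "p = pj")
          case True then show ?thesis using \<open>i = pj\<close> i pj sn by auto
        next
          case False then show ?thesis using \<open>i = pj\<close> i pj p sn by auto
        qed
      qed
      moreover have "swap_pos i \<pi> ! (pj - 1) = j" using True i pj sn by auto
      ultimately show ?thesis using pj True i by (intro exI[of _ "pj - 1"]) auto
    next
      case False
      have "i \<noteq> pj + 1"
      proof
        assume "i = pj + 1"
        then have "\<pi>!(i-1) = j" "\<pi>!i < j" using pj by auto
        then show False using i by auto
      qed
      have "\<forall>p. pj < p \<and> p \<le> k \<longrightarrow> swap_pos i \<pi> ! p < j"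
      proof (intro allI impI)
        fix p assume p: "pj < p \<and> p \<le> k"
        show "swap_pos i \<pi> ! p < j"
        proof (cases "p = i - 1")
          case True
          then have "i \<le> k" "pj < i" using p ik i by auto
          then show ?thesis using True pj i sn by auto
        next
          case F1: False
          show ?thesis
          proof (cases "p = i")
            case True
            then have "pj < i - 1" using p \<open>i \<noteq> pj + 1\<close> by auto
            then show ?thesis using True F1 pj i p sn by auto
          next
            case False
            then show ?thesis using F1 pj p sn by auto
          qed
        qed
      qed
      moreover have "swap_pos i \<pi> ! pj = j" using False \<open>i \<noteq> pj + 1\<close> pj sn by auto
      ultimately show ?thesis using pj by blast
    qed
    show ?thesis unfolding u Inv_def using d' hk ex large by auto
  qed
qed

lemma Inv_step:
  assumes "Inv n j \<pi> q" "1 \<le> i" "i < n" "\<pi>!(i-1) < \<pi>!i"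
  shows "Inv n j (swap_pos i \<pi>) (u_delta n q i)"
proof (cases q)
  case (H k) then show ?thesis using Inv_step_H assms by simp
next
  case (I k) then show ?thesis using Inv_step_I assms by simp
next
  case (D k)
  have "1 \<le> i" "i < length \<pi>" using assms unfolding Inv_def by auto
  then show ?thesis using D assms swap_distinct unfolding Inv_def by auto
qed

lemma Inv_run:
  "asc_chain \<pi> w \<Longrightarrow> Inv n j \<pi> q \<Longrightarrow> Inv n j (fold swap_pos w \<pi>) (fold (\<lambda>i q. u_delta n q i) w q)"
proof (induction w arbitrary: \<pi> q)
  case Nil then show ?case by simp
next
  case (Cons i w)
  have n: "length \<pi> = n" using Cons.prems unfolding Inv_def by auto
  have "Inv n j (swap_pos i \<pi>) (u_delta n q i)" using Inv_step[OF Cons.prems(2)] Cons.prems(1) n by auto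
  then show ?case using Cons.IH Cons.prems(1) by simp
qed

lemma Inv_good:
  assumes "Inv n j \<sigma> q" "u_accepting q"
  shows "Pgood j \<sigma>"
  unfolding Pgood_def
proof (intro allI impI notI)
  fix U V W c a
  assume s: "\<sigma> = U @ [j] @ V @ [c, a] @ W" and ac: "a < j \<and> j < c"
  have d: "distinct \<sigma>" "length \<sigma> = n" using assms unfolding Inv_def by auto
  define p0 where "p0 = length U"
  define t where "t = length U + 1 + length V"
  have e0: "\<sigma>!p0 = j" unfolding s p0_def by simp
  have et: "\<sigma>!t = c" unfolding s t_def by (simp add: nth_append)
  have et1: "\<sigma>!(t+1) = a" unfolding s t_def by (simp add: nth_append)
  have lt: "t + 1 < n" "p0 < t" unfolding t_def p0_def using d(2) s by auto
  show False
  proof (cases q)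
    case (H k)
    then have hk: "k < n" "\<sigma>!k = j" "\<forall>p. k < p \<and> p < n \<longrightarrow> j < \<sigma>!p" using assms(1) unfolding Inv_def by auto
    have "k = p0" using nth_eq_iff_index_eq[OF d(1), of k p0] hk e0 lt d by auto
    then show False using hk(3) lt et1 ac by (metis add_lessD1 less_SucI less_trans not_less_iff_gr_or_eq Suc_eq_plus1)
  next
    case (I k)
    then have hk: "k < n" "\<forall>p. k < p \<and> p < n \<longrightarrow> j < \<sigma>!p" using assms(1) unfolding Inv_def by auto
    obtain pj where pj: "pj < k" "\<sigma>!pj = j" "\<forall>p. pj < p \<and> p \<le> k \<longrightarrow> \<sigma>!p < j"
      using I assms(1) unfolding Inv_def by auto
    have "pj = p0" using nth_eq_iff_index_eq[OF d(1), of pj p0] pj e0 lt d hk by auto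
    show False
    proof (cases "t + 1 \<le> k")
      case True
      then show False using pj(3)[rule_format, of t] \<open>pj = p0\<close> lt et ac by auto
    next
      case False
      then show False using hk(2)[rule_format, of "t+1"] lt et1 ac by auto
    qed
  next
    case (D k) then show False using assms(2) by simp
  qed
qed



section \<open>Minimality characterization\<close>

lemma tw_split: "j \<notin> set U \<Longrightarrow> takeWhile (\<lambda>x. x \<noteq> j) (U @ [j] @ S) = U"
  by (induction U) auto

lemma dw_split: "j \<notin> set U \<Longrightarrow> dropWhile (\<lambda>x. x \<noteq> j) (U @ [j] @ S) = j # S"
  by (induction U) auto

lemma split_unique:
  assumes "U @ [j] @ S = U' @ [j] @ S'" "j \<notin> set U" "j \<notin> set U'"
  shows "U = U' \<and> S = S'"
  using tw_split[OF assms(2), of S] tw_split[OF assms(3), of S'] dw_split[OF assms(2), of S]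
    dw_split[OF assms(3), of S'] assms(1) by auto

definition cinv :: "nat \<Rightarrow> nat list \<Rightarrow> nat list \<Rightarrow> bool" where
  "cinv j \<sigma> \<tau> \<longleftrightarrow> distinct \<tau> \<and> (\<forall>U S. \<sigma> = U @ [j] @ S \<longrightarrow>
      (\<exists>S'. \<tau> = U @ [j] @ S' \<and> filter (\<lambda>x. x < j) S' = filter (\<lambda>x. x < j) S
            \<and> filter (\<lambda>x. j < x) S' = filter (\<lambda>x. j < x) S \<and> set S' = set S))"

lemma cinv_step:
  assumes "cinv j \<sigma> \<tau>" "cong_step j \<tau> \<tau>' \<or> cong_step j \<tau>' \<tau>"
  shows "cinv j \<sigma> \<tau>'"
proof -
  obtain U0 V W a c where ac: "a < j" "j < c" and
    st: "(\<tau> = U0 @ [j] @ V @ [a, c] @ W \<and> \<tau>' = U0 @ [j] @ V @ [c, a] @ W) \<or>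
         (\<tau> = U0 @ [j] @ V @ [c, a] @ W \<and> \<tau>' = U0 @ [j] @ V @ [a, c] @ W)"
    using assms(2) unfolding cong_step_def by blast
  have dt: "distinct \<tau>" using assms(1) unfolding cinv_def by auto
  have dt': "distinct \<tau>'" using dt st by auto
  show ?thesis unfolding cinv_def
  proof (intro conjI dt' allI impI)
    fix U S assume s: "\<sigma> = U @ [j] @ S"
    obtain S' where S': "\<tau> = U @ [j] @ S'" "filter (\<lambda>x. x < j) S' = filter (\<lambda>x. x < j) S"
      "filter (\<lambda>x. j < x) S' = filter (\<lambda>x. j < x) S" "set S' = set S"
      using assms(1) s unfolding cinv_def by blast
    have jU: "j \<notin> set U" using dt S'(1) by auto
    have jU0: "j \<notin> set U0" using dt st by auto
    show "\<exists>S'. \<tau>' = U @ [j] @ S' \<and> filter (\<lambda>x. x < j) S' = filter (\<lambda>x. x < j) S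
            \<and> filter (\<lambda>x. j < x) S' = filter (\<lambda>x. j < x) S \<and> set S' = set S"
      using st
    proof
      assume h: "\<tau> = U0 @ [j] @ V @ [a, c] @ W \<and> \<tau>' = U0 @ [j] @ V @ [c, a] @ W"
      have e: "U0 @ [j] @ (V @ [a, c] @ W) = U @ [j] @ S'" using h S'(1) by simp
      have u: "U0 = U" and v: "S' = V @ [a, c] @ W" using split_unique[OF e jU0 jU] by auto
      have t': "\<tau>' = U @ [j] @ (V @ [c, a] @ W)" using h u by simp
      have f1: "filter (\<lambda>x. x < j) (V @ [c, a] @ W) = filter (\<lambda>x. x < j) S'" unfolding v using ac by simp
      have f2: "filter (\<lambda>x. j < x) (V @ [c, a] @ W) = filter (\<lambda>x. j < x) S'" unfolding v using ac by simp
      have f3: "set (V @ [c, a] @ W) = set S'" unfolding v by auto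
      show ?thesis using t' f1 f2 f3 S'(2,3,4) by metis
    next
      assume h: "\<tau> = U0 @ [j] @ V @ [c, a] @ W \<and> \<tau>' = U0 @ [j] @ V @ [a, c] @ W"
      have e: "U0 @ [j] @ (V @ [c, a] @ W) = U @ [j] @ S'" using h S'(1) by simp
      have u: "U0 = U" and v: "S' = V @ [c, a] @ W" using split_unique[OF e jU0 jU] by auto
      have t': "\<tau>' = U @ [j] @ (V @ [a, c] @ W)" using h u by simp
      have f1: "filter (\<lambda>x. x < j) (V @ [a, c] @ W) = filter (\<lambda>x. x < j) S'" unfolding v using ac by simp
      have f2: "filter (\<lambda>x. j < x) (V @ [a, c] @ W) = filter (\<lambda>x. j < x) S'" unfolding v using ac by simp
      have f3: "set (V @ [a, c] @ W) = set S'" unfolding v by auto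
      show ?thesis using t' f1 f2 f3 S'(2,3,4) by metis
    qed
  qed
qed

lemma cinv_congj:
  assumes "congj j \<sigma> \<tau>" "distinct \<sigma>"
  shows "cinv j \<sigma> \<tau>"
  using assms(1) unfolding congj_def
proof (induction rule: rtranclp_induct)
  case base
  then show ?case using assms(2) unfolding cinv_def by auto
next
  case (step y z)
  then show ?case using cinv_step by blast
qed

lemma adj_to_bef:
  assumes "\<forall>V W c a. S = V @ [c, a] @ W \<longrightarrow> \<not> (a < j \<and> j < c)" "j \<notin> set S"
  shows "\<forall>c a. bef S c a \<longrightarrow> \<not> (a < j \<and> j < c)"
  using assms
proof (induction S)
  case Nil then show ?case by simp
next
  case (Cons x S)
  have h1: "\<forall>V W c a. S = V @ [c, a] @ W \<longrightarrow> \<not> (a < j \<and> j < c)"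
  proof (intro allI impI)
    fix V W c a assume "S = V @ [c, a] @ W"
    then have "x # S = (x # V) @ [c, a] @ W" by simp
    then show "\<not> (a < j \<and> j < c)" using Cons.prems(1) by blast
  qed
  have IH: "\<forall>c a. bef S c a \<longrightarrow> \<not> (a < j \<and> j < c)" using Cons.IH[OF h1] Cons.prems(2) by auto
  show ?case
  proof (intro allI impI notI)
    fix c a assume b: "bef (x # S) c a" and ac: "a < j \<and> j < c"
    then have "(c = x \<and> a \<in> set S)" using IH by (auto simp: bef_Cons)
    then obtain y S'' where S: "S = y # S''" by (cases S) auto
    show False
    proof (cases "y < j")
      case True
      have "x # S = [] @ [x, y] @ S''" using S by simp
      then show False using Cons.prems(1) True ac \<open>c = x \<and> a \<in> set S\<close> by blast
    next
      case False
      have "y \<noteq> j" using Cons.prems(2) S by auto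
      then have yj: "j < y" using False by simp
      have "a \<noteq> y" using ac yj by auto
      then have "a \<in> set S''" using S \<open>c = x \<and> a \<in> set S\<close> by auto
      then have "bef S y a" using S by (simp add: bef_Cons)
      then show False using IH ac yj by blast
    qed
  qed
qed

lemma bef_split:
  assumes "\<forall>c a. bef S c a \<longrightarrow> \<not> (a < j \<and> j < c)" "j \<notin> set S"
  shows "S = filter (\<lambda>x. x < j) S @ filter (\<lambda>x. j < x) S"
  using assms
proof (induction S)
  case Nil then show ?case by simp
next
  case (Cons x S)
  have IH: "S = filter (\<lambda>x. x < j) S @ filter (\<lambda>x. j < x) S"
    using Cons.IH Cons.prems by (auto simp: bef_Cons)
  show ?case
  proof (cases "x < j")
    case True
    then show ?thesis using IH by simp
  next
    case False
    then have xj: "j < x" using Cons.prems(2) by auto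
    have "\<forall>a\<in>set S. j < a"
    proof
      fix a assume a: "a \<in> set S"
      then have "bef (x # S) x a" by (simp add: bef_Cons)
      then have "\<not> a < j" using Cons.prems(1) xj by blast
      moreover have "a \<noteq> j" using a Cons.prems(2) by auto
      ultimately show "j < a" by simp
    qed
    then have "filter (\<lambda>x. x < j) S = []" "filter (\<lambda>x. j < x) S = S" by (auto simp: filter_empty_conv)
    then show ?thesis using xj by simp
  qed
qed

lemma bef_drop_prefix: "j \<notin> set A \<Longrightarrow> bef (A @ B) j x \<Longrightarrow> bef B j x"
  by (auto simp: bef_append dest: bef_set)

lemma notgood_notmin:
  assumes "distinct \<sigma>" "\<not> Pgood j \<sigma>"
  shows "\<not> weak_minimal_in_class j \<sigma>"
proof -
  obtain U V W c a where s: "\<sigma> = U @ [j] @ V @ [c, a] @ W" and ac: "a < j" "j < c"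
    using assms(2) unfolding Pgood_def by blast
  define \<tau> where "\<tau> = U @ [j] @ V @ [a, c] @ W"
  have cs: "cong_step j \<tau> \<sigma>" unfolding cong_step_def \<tau>_def s using ac by blast
  then have cj: "congj j \<sigma> \<tau>" unfolding congj_def by auto
  have dt: "distinct ((U @ [j] @ V) @ [a, c] @ W)" using assms(1) s by auto
  have "inversions ((U @ [j] @ V) @ [c, a] @ W) = insert (a, c) (inversions ((U @ [j] @ V) @ [a, c] @ W))"
    using inv_asc(1)[OF dt] ac by simp
  then have "weak_le \<tau> \<sigma>" unfolding weak_le_def \<tau>_def s by auto
  moreover have "\<tau> \<noteq> \<sigma>" unfolding \<tau>_def s using ac by simp
  ultimately show ?thesis unfolding weak_minimal_in_class_def using cj by blast
qed

lemma good_min: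
  assumes "distinct \<sigma>" "j \<in> set \<sigma>" "Pgood j \<sigma>"
  shows "weak_minimal_in_class j \<sigma>"
  unfolding weak_minimal_in_class_def
proof
  assume "\<exists>\<tau>. congj j \<sigma> \<tau> \<and> weak_le \<tau> \<sigma> \<and> \<tau> \<noteq> \<sigma>"
  then obtain \<tau> where t: "congj j \<sigma> \<tau>" "inversions \<tau> \<subseteq> inversions \<sigma>" "\<tau> \<noteq> \<sigma>"
    unfolding weak_le_def by blast
  obtain U S where s: "\<sigma> = U @ [j] @ S" using assms(2) by (metis append_Cons append_Nil split_list)
  have jS: "j \<notin> set S" "j \<notin> set U" using assms(1) s by auto
  have adj: "\<forall>V W c a. S = V @ [c, a] @ W \<longrightarrow> \<not> (a < j \<and> j < c)"
  proof (intro allI impI)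
    fix V W c a assume "S = V @ [c, a] @ W"
    then have "\<sigma> = U @ [j] @ V @ [c, a] @ W" using s by simp
    then show "\<not> (a < j \<and> j < c)" using assms(3) unfolding Pgood_def by blast
  qed
  have Ssplit: "S = filter (\<lambda>x. x < j) S @ filter (\<lambda>x. j < x) S"
    using bef_split[OF adj_to_bef[OF adj jS(1)] jS(1)] .
  have ci: "cinv j \<sigma> \<tau>" using cinv_congj[OF t(1) assms(1)] .
  obtain S' where S': "\<tau> = U @ [j] @ S'" "filter (\<lambda>x. x < j) S' = filter (\<lambda>x. x < j) S"
      "filter (\<lambda>x. j < x) S' = filter (\<lambda>x. j < x) S" "set S' = set S" "distinct \<tau>"
    using ci s unfolding cinv_def by blast
  have jS': "j \<notin> set S'" using S' jS by auto
  have nob: "\<forall>c a. bef S' c a \<longrightarrow> \<not> (a < j \<and> j < c)"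
  proof (intro allI impI notI)
    fix c a assume b: "bef S' c a" and ac: "a < j \<and> j < c"
    have "bef \<tau> c a" using b S'(1) by (simp add: bef_append bef_Cons)
    then have "(a, c) \<in> inversions \<tau>" using ac unfolding inv_bef by auto
    then have "bef \<sigma> c a" using t(2) unfolding inv_bef by auto
    have cS: "c \<in> set S" "a \<in> set S" using b bef_set S'(4) by auto
    have "c \<notin> set U" "c \<noteq> j" using cS assms(1) s by auto
    then have "bef ([j] @ S) c a" using bef_drop_prefix[of c U "[j] @ S" a] \<open>bef \<sigma> c a\<close> s by simp
    then have "bef S c a" using \<open>c \<noteq> j\<close> by (simp add: bef_Cons)
    then have b2: "bef (filter (\<lambda>x. x < j) S @ filter (\<lambda>x. j < x) S) c a"
      using Ssplit by metis
    show False using b2 ac by (auto simp: bef_append dest: bef_set)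
  qed
  have "S' = filter (\<lambda>x. x < j) S' @ filter (\<lambda>x. j < x) S'" using bef_split[OF nob jS'] .
  then have "S' = filter (\<lambda>x. x < j) S @ filter (\<lambda>x. j < x) S" using S'(2,3) by simp
  then have "S' = S" using Ssplit by metis
  then show False using t(3) S'(1) s by simp
qed



lemma H_run:
  assumes "asc_chain \<pi> w" "Inv n j \<pi> (H k)" "\<forall>x. (x, j) \<notin> inversions (fold swap_pos w \<pi>)"
  shows "\<exists>k'. fold (\<lambda>i q. u_delta n q i) w (H k) = H k'"
  using assms
proof (induction w arbitrary: \<pi> k)
  case Nil then show ?case by simp
next
  case (Cons i w)
  have d: "distinct \<pi>" "length \<pi> = n" and hk: "k < n" "\<pi>!k = j"
    using Cons.prems(2) unfolding Inv_def by auto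
  have i: "1 \<le> i" "i < length \<pi>" "\<pi>!(i-1) < \<pi>!i" "asc_chain (swap_pos i \<pi>) w"
    using Cons.prems(1) by auto
  have d': "distinct (swap_pos i \<pi>)" using swap_distinct[OF i(1,2)] d by simp
  have sub: "inversions (swap_pos i \<pi>) \<subseteq> inversions (fold swap_pos w (swap_pos i \<pi>))"
    using asc_chain_props(2)[OF i(4) d'] .
  have ik: "i \<noteq> k"
  proof
    assume "i = k"
    then have "(\<pi>!(i-1), j) \<in> inversions (swap_pos i \<pi>)"
      using swap_inv_asc(1)[OF i(1,2) d(1) i(3)] hk by simp
    then show False using sub Cons.prems(3) by auto
  qed
  have "\<exists>k''. u_delta n (H k) i = H k''" using ik by auto
  then obtain k'' where k'': "u_delta n (H k) i = H k''" by blast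
  have "Inv n j (swap_pos i \<pi>) (H k'')"
    using Inv_step[OF Cons.prems(2) i(1) _ i(3)] i(2) d(2) k'' by simp
  then show ?case using Cons.IH[OF i(4)] Cons.prems(3) k'' by simp
qed

lemma I_stay: "\<forall>i\<in>set w. i \<noteq> k + 1 \<Longrightarrow> fold (\<lambda>i q. u_delta n q i) w (I k) = I k"
  by (induction w) auto

lemma good_decomp:
  assumes "distinct \<sigma>" "\<sigma> = U @ [j] @ S" "Pgood j \<sigma>"
  shows "S = filter (\<lambda>x. x < j) S @ filter (\<lambda>x. j < x) S"
proof -
  have jS: "j \<notin> set S" using assms by auto
  have adj: "\<forall>V W c a. S = V @ [c, a] @ W \<longrightarrow> \<not> (a < j \<and> j < c)"
  proof (intro allI impI)
    fix V W c a assume "S = V @ [c, a] @ W"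
    then have "\<sigma> = U @ [j] @ V @ [c, a] @ W" using assms(2) by simp
    then show "\<not> (a < j \<and> j < c)" using assms(3) unfolding Pgood_def by blast
  qed
  show ?thesis using bef_split[OF adj_to_bef[OF adj jS] jS] .
qed

lemma Inv_init:
  assumes "1 \<le> j" "j < n"
  shows "Inv n j [1..<n+1] (H (j-1))"
proof -
  have e: "p < n \<Longrightarrow> [1..<n+1]!p = p + 1" for p by (simp del: upt_Suc)
  have "[1..<n+1]!(j-1) = j" using e[of "j-1"] assms by simp
  moreover have "\<forall>p. j - 1 < p \<and> p < n \<longrightarrow> j < [1..<n+1]!p" using e assms by auto
  ultimately show ?thesis unfolding Inv_def using assms by (simp del: upt_Suc)
qed

lemma construct:
  assumes "\<sigma> \<in> perms n" "1 \<le> j" "j < n" "Pgood j \<sigma>"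
  shows "\<exists>w. asc_chain [1..<n+1] w \<and> fold swap_pos w [1..<n+1] = \<sigma> \<and>
             u_accepting (fold (\<lambda>i q. u_delta n q i) w (H (j-1)))"
proof -
  let ?\<iota> = "[1..<n+1]"
  have di: "distinct ?\<iota>" "set ?\<iota> = {1..n}" "length ?\<iota> = n" by auto
  have ds: "distinct \<sigma>" "set \<sigma> = {1..n}" using assms(1) unfolding perms_def by auto
  have ls: "length \<sigma> = n" using ds distinct_card by fastforce
  have "j \<in> set \<sigma>" using ds assms by auto
  then obtain U S where s: "\<sigma> = U @ [j] @ S" by (metis append_Cons append_Nil split_list)
  define L where "L = filter (\<lambda>x. x < j) S"
  define G where "G = filter (\<lambda>x. j < x) S"
  have SLG: "S = L @ G" unfolding L_def G_def using good_decomp[OF ds(1) s assms(4)] .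
  have Lsmall: "\<forall>y\<in>set L. y < j" and Glarge: "\<forall>y\<in>set G. j < y" unfolding L_def G_def by auto
  have jUL: "j \<notin> set U" "j \<notin> set L" "j \<notin> set G" using ds(1) s SLG by auto
  have inv0: "Inv n j ?\<iota> (H (j-1))" using Inv_init assms(2,3) by simp
  show ?thesis
  proof (cases "L = []")
    case True
    have sG: "\<sigma> = U @ [j] @ G" using s SLG True by simp
    obtain w where w: "asc_chain ?\<iota> w" "fold swap_pos w ?\<iota> = \<sigma>"
      using chain[OF di(1) ds(1)] di ds inv_id by auto
    have nx: "\<forall>x. (x, j) \<notin> inversions (fold swap_pos w ?\<iota>)"
    proof (intro allI notI)
      fix x assume "(x, j) \<in> inversions (fold swap_pos w ?\<iota>)"
      then have xj: "x < j" "bef \<sigma> j x" using w(2) unfolding inv_bef by auto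
      then have "bef ([j] @ G) j x" using bef_drop_prefix[of j U "[j] @ G" x] sG jUL by simp
      then have "x \<in> set G" using jUL by (auto simp: bef_Cons dest: bef_set)
      then show False using Glarge xj by auto
    qed
    obtain k' where "fold (\<lambda>i q. u_delta n q i) w (H (j-1)) = H k'" using H_run[OF w(1) inv0 nx] by blast
    then show ?thesis using w by (intro exI[of _ w]) auto
  next
    case False
    define x where "x = last L"
    define L' where "L' = butlast L"
    have Lx: "L = L' @ [x]" unfolding x_def L'_def using False by simp
    have xj: "x < j" using Lsmall Lx by auto
    define \<rho> where "\<rho> = U @ L @ [j] @ G"
    define B where "B = length U + length L"
    have \<rho>2: "\<rho> = (U @ L') @ [x, j] @ G" unfolding \<rho>_def Lx by simp
    have dr: "distinct \<rho>" using ds(1) s SLG unfolding \<rho>_def by auto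
    have sr: "set \<rho> = set \<sigma>" using s SLG unfolding \<rho>_def by auto
    have nx: "\<forall>y. (y, j) \<notin> inversions \<rho>"
    proof (intro allI notI)
      fix y assume "(y, j) \<in> inversions \<rho>"
      then have yj: "y < j" "bef \<rho> j y" unfolding inv_bef by auto
      then have "bef ([j] @ G) j y" using bef_drop_prefix[of j "U @ L" "[j] @ G" y] jUL unfolding \<rho>_def by simp
      then have "y \<in> set G" using jUL by (auto simp: bef_Cons dest: bef_set)
      then show False using Glarge yj by auto
    qed
    obtain w1 where w1: "asc_chain ?\<iota> w1" "fold swap_pos w1 ?\<iota> = \<rho>"
      using chain[OF di(1) dr] di ds sr inv_id by auto
    obtain k' where k': "fold (\<lambda>i q. u_delta n q i) w1 (H (j-1)) = H k'"
      using H_run[OF w1(1) inv0] nx w1(2) by auto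
    have "Inv n j \<rho> (H k')" using Inv_run[OF w1(1) inv0] k' w1(2) by simp
    then have k'p: "k' < n" "\<rho>!k' = j" "length \<rho> = n" unfolding Inv_def by auto
    have rB: "\<rho>!B = j" "B < length \<rho>" unfolding \<rho>_def B_def by (auto simp: nth_append)
    have kB: "k' = B" using nth_eq_iff_index_eq[OF dr, of k' B] k'p rB by auto
    have lA: "length (U @ L') = B - 1" "1 \<le> B" unfolding B_def using Lx by auto
    have rB1: "\<rho>!(B-1) = x"
    proof -
      have "\<rho> = (U @ L') @ x # (j # G)" using \<rho>2 by simp
      then have "\<rho>!(length (U @ L')) = x" by (metis nth_append_length)
      then show ?thesis using lA(1) by simp
    qed
    have rB': "\<rho>!B = j" using rB by simp
    define \<rho>' where "\<rho>' = swap_pos B \<rho>"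
    have \<rho>'2: "\<rho>' = (U @ L') @ [j, x] @ G" unfolding \<rho>'_def \<rho>2 using swap_app[OF lA(1) lA(2)] by simp
    have uB: "u_delta n (H B) B = I B" using rB(2) k'p(3) by auto
    have dr2: "distinct ((U @ L') @ [x, j] @ G)" using dr \<rho>2 by simp
    have invr': "inversions \<rho>' = insert (x, j) (inversions \<rho>)"
      using inv_asc(1)[OF dr2 xj] \<rho>2 \<rho>'2 by simp
    have xinv: "(x, j) \<in> inversions \<sigma>"
    proof -
      have "x \<in> set L" using Lx by simp
      then have "bef ([j] @ L @ G) j x" by (simp add: bef_Cons)
      then have "bef \<sigma> j x" unfolding s SLG by (simp add: bef_append)
      then show ?thesis using xj unfolding inv_bef by auto
    qed
    have rinv: "inversions \<rho> \<subseteq> inversions \<sigma>"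
    proof
      fix p assume p: "p \<in> inversions \<rho>"
      obtain a b where ab: "p = (a, b)" by (cases p)
      have ab1: "a < b" "bef \<rho> b a" using p ab unfolding inv_bef by auto
      have nb: "\<not> (b \<in> set L \<and> a = j)" using ab1(1) Lsmall by auto
      have "bef \<sigma> b a" using ab1(2) nb unfolding s SLG \<rho>_def by (auto simp: bef_append bef_Cons)
      then show "p \<in> inversions \<sigma>" using ab ab1 unfolding inv_bef by auto
    qed
    have sub2: "inversions \<rho>' \<subseteq> inversions \<sigma>" using invr' xinv rinv by auto
    have dr': "distinct \<rho>'" using dr2 \<rho>'2 by auto
    have sr': "set \<rho>' = set \<sigma>" using sr \<rho>'2 \<rho>2 by auto
    obtain w2 where w2: "asc_chain \<rho>' w2" "fold swap_pos w2 \<rho>' = \<sigma>"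
      "\<forall>c. set (take c \<rho>') = set (take c \<sigma>) \<longrightarrow> c \<notin> set w2"
      using chain[OF dr' ds(1) sr' sub2] by blast
    have t1: "take (B+1) \<rho>' = U @ L' @ [j, x]"
    proof -
      have "length (U @ L' @ [j, x]) = B + 1" using lA by simp
      then show ?thesis unfolding \<rho>'2 by (metis append.assoc append_eq_conv_conj)
    qed
    have t2: "take (B+1) \<sigma> = U @ [j] @ L"
    proof -
      have "length (U @ [j] @ L) = B + 1" unfolding B_def by simp
      then show ?thesis unfolding s SLG by (metis append.assoc append_eq_conv_conj)
    qed
    have "set (take (B+1) \<rho>') = set (take (B+1) \<sigma>)" unfolding t1 t2 Lx by auto
    then have nB: "\<forall>i\<in>set w2. i \<noteq> B + 1" using w2(3) by blast
    have ac: "asc_chain ?\<iota> (w1 @ [B] @ w2)"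
      unfolding asc_chain_append using w1 w2(1) lA(2) rB(2) rB1 rB' xj \<rho>'_def by simp
    have fo: "fold swap_pos (w1 @ [B] @ w2) ?\<iota> = \<sigma>" using w1(2) w2(2) \<rho>'_def by simp
    have st: "fold (\<lambda>i q. u_delta n q i) (w1 @ [B] @ w2) (H (j-1)) = I B"
      using k' kB uB I_stay[OF nB] by simp
    show ?thesis using ac fo st by (intro exI[of _ "w1 @ [B] @ w2"]) simp
  qed
qed

theorem theorem1p1:
  fixes n j :: nat and \<sigma> :: "nat list"
  assumes "n \<ge> 3" and "2 \<le> j" and "j \<le> n - 1" and "\<sigma> \<in> perms n"
  shows "weak_minimal_in_class j \<sigma> \<longleftrightarrow>
         (\<exists>w. is_word n w \<and> reduced_word n w \<and> word_perm n w = \<sigma> \<and> U_accepts n j w)"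
proof -
  have ds: "distinct \<sigma>" "set \<sigma> = {1..n}" using assms(4) unfolding perms_def by auto
  have jn: "1 \<le> j" "j < n" using assms by auto
  have js: "j \<in> set \<sigma>" using ds jn by auto
  have n1: "n \<ge> 1" using assms by simp
  have m: "weak_minimal_in_class j \<sigma> \<longleftrightarrow> Pgood j \<sigma>"
    using good_min[OF ds(1) js] notgood_notmin[OF ds(1)] by blast
  have "Pgood j \<sigma> \<longleftrightarrow> (\<exists>w. is_word n w \<and> reduced_word n w \<and> word_perm n w = \<sigma> \<and> U_accepts n j w)"
  proof
    assume "Pgood j \<sigma>"
    then obtain w where w: "asc_chain [1..<n+1] w" "fold swap_pos w [1..<n+1] = \<sigma>"
      "u_accepting (fold (\<lambda>i q. u_delta n q i) w (H (j-1)))"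
      using construct[OF assms(4) jn] by blast
    then show "\<exists>w. is_word n w \<and> reduced_word n w \<and> word_perm n w = \<sigma> \<and> U_accepts n j w"
      using reduced_iff[OF n1, of w] unfolding word_perm_def U_accepts_def by blast
  next
    assume "\<exists>w. is_word n w \<and> reduced_word n w \<and> word_perm n w = \<sigma> \<and> U_accepts n j w"
    then obtain w where w: "is_word n w" "reduced_word n w" "word_perm n w = \<sigma>" "U_accepts n j w" by blast
    have ac: "asc_chain [1..<n+1] w" using reduced_iff[OF n1] w by blast
    have "Inv n j \<sigma> (fold (\<lambda>i q. u_delta n q i) w (H (j-1)))"
      using Inv_run[OF ac Inv_init[OF jn]] w(3) unfolding word_perm_def by simp
    then show "Pgood j \<sigma>" using Inv_good w(4) unfolding U_accepts_def by blast
  qed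
  then show ?thesis using m by simp
qed

end
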